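(* Let $V$ be a finite-dimensional vector space over a finite field of characteristic $p$, equipped with a bilinear or hermitian form which is either nondegenerate or identically zero, and let $\Delta=\Delta(V)$ be the group of all similarities of $V$ (with respect to this form). Let $x\in\Delta$ be an element of prime-power order whose image in $\Delta/\mathrm{Z}(\Delta)$ has prime order. Then one of the following holds: (1) $x$ is unipotent and stabilizes a $1$-dimensional subspace; (2) the form is identically zero, $x$ is semisimple and leaves invariant two nonzero subspaces complementing each other; (3) the form is nondegenerate, $x$ is semisimple and leaves invariant a proper nonzero nondegenerate subspace and its orthogonal complement; (4) the form is nondegenerate and of maximal Witt index, $x$ is semisimple and leaves invariant a totally isotropic subspace of dimension $\frac{1}{2}\dim V$; (5) $x$ is semisimple and acts irreducibly on $V$.
   Context: An element is unipotent if its order is a power of $p$ and semisimple if its order is coprime to $p$. A subspace is nondegenerate if the restriction of the form to it is nondegenerate, and totally isotropic if the restriction of the form to it is identically zero. *)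

theory Defs
  imports "HOL-Analysis.Analysis"
begin

text \<open>A form is a map B :: V => V => 'k, sesquilinear w.r.t. a field
automorphism sigma with sigma o sigma = id (sigma = id in the bilinear case).\<close>

definition field_invol :: "('k::field \<Rightarrow> 'k) \<Rightarrow> bool" where
  "field_invol \<sigma> \<longleftrightarrow> (\<forall>a b. \<sigma> (a + b) = \<sigma> a + \<sigma> b) \<and> (\<forall>a b. \<sigma> (a * b) = \<sigma> a * \<sigma> b)
     \<and> (\<forall>a. \<sigma> (\<sigma> a) = a)"

definition sesquilinear :: "('k::field \<Rightarrow> 'k) \<Rightarrow> ('k^'n \<Rightarrow> 'k^'n \<Rightarrow> 'k) \<Rightarrow> bool" where
  "sesquilinear \<sigma> B \<longleftrightarrow>
     (\<forall>u u' v. B (u + u') v = B u v + B u' v) \<and> (\<forall>c u v. B (c *s u) v = c * B u v) \<and>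
     (\<forall>u v v'. B u (v + v') = B u v + B u v') \<and> (\<forall>c u v. B u (c *s v) = \<sigma> c * B u v)"

definition bil_or_herm_form :: "('k::field \<Rightarrow> 'k) \<Rightarrow> ('k^'n \<Rightarrow> 'k^'n \<Rightarrow> 'k) \<Rightarrow> bool" where
  "bil_or_herm_form \<sigma> B \<longleftrightarrow> field_invol \<sigma> \<and> sesquilinear \<sigma> B \<and>
     ((\<sigma> = id \<and> ((\<forall>u v. B u v = B v u) \<or> (\<forall>v. B v v = 0))) \<or>
      (\<sigma> \<noteq> id \<and> (\<forall>u v. B u v = \<sigma> (B v u))))"

definition nondegenerate_form :: "('k::field^'n \<Rightarrow> 'k^'n \<Rightarrow> 'k) \<Rightarrow> bool" where
  "nondegenerate_form B \<longleftrightarrow> (\<forall>u. (\<forall>v. B u v = 0) \<longrightarrow> u = 0)"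

definition zero_form :: "('k::field^'n \<Rightarrow> 'k^'n \<Rightarrow> 'k) \<Rightarrow> bool" where
  "zero_form B \<longleftrightarrow> (\<forall>u v. B u v = 0)"

definition similarities :: "('k::field^'n \<Rightarrow> 'k^'n \<Rightarrow> 'k) \<Rightarrow> ('k^'n^'n) set" where
  "similarities B = {g. invertible g \<and>
      (\<exists>c. c \<noteq> 0 \<and> (\<forall>u v. B (g *v u) (g *v v) = c * B u v))}"

definition group_center :: "('k::field^'n^'n) set \<Rightarrow> ('k^'n^'n) set" where
  "group_center G = {z \<in> G. \<forall>g\<in>G. z ** g = g ** z}"

primrec mpow :: "'k::field^'n^'n \<Rightarrow> nat \<Rightarrow> 'k^'n^'n" where
  "mpow x 0 = mat 1"
| "mpow x (Suc m) = x ** mpow x m"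

definition elem_order :: "'k::field^'n^'n \<Rightarrow> nat" where
  "elem_order x = (LEAST m. 0 < m \<and> mpow x m = mat 1)"

text \<open>Order of the image of x in the quotient group G/Z, Z a normal subgroup
  (the coset xZ has order the least m>0 with x^m in Z).\<close>
definition quot_order :: "('k::field^'n^'n) set \<Rightarrow> 'k^'n^'n \<Rightarrow> nat" where
  "quot_order Z x = (LEAST m. 0 < m \<and> mpow x m \<in> Z)"

definition unipotent :: "'k::field^'n^'n \<Rightarrow> bool" where
  "unipotent x \<longleftrightarrow> (\<exists>k. elem_order x = CHAR('k) ^ k)"

definition semisimple :: "'k::field^'n^'n \<Rightarrow> bool" where
  "semisimple x \<longleftrightarrow> coprime (elem_order x) CHAR('k)"

definition invariant :: "'k::field^'n^'n \<Rightarrow> ('k^'n) set \<Rightarrow> bool" where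
  "invariant x W \<longleftrightarrow> (\<lambda>v. x *v v) ` W \<subseteq> W"

definition nondegenerate_subspace :: "('k::field^'n \<Rightarrow> 'k^'n \<Rightarrow> 'k) \<Rightarrow> ('k^'n) set \<Rightarrow> bool" where
  "nondegenerate_subspace B W \<longleftrightarrow> (\<forall>u\<in>W. (\<forall>v\<in>W. B u v = 0) \<longrightarrow> u = 0)"

definition totally_isotropic :: "('k::field^'n \<Rightarrow> 'k^'n \<Rightarrow> 'k) \<Rightarrow> ('k^'n) set \<Rightarrow> bool" where
  "totally_isotropic B W \<longleftrightarrow> (\<forall>u\<in>W. \<forall>v\<in>W. B u v = 0)"

definition orth_compl :: "('k::field^'n \<Rightarrow> 'k^'n \<Rightarrow> 'k) \<Rightarrow> ('k^'n) set \<Rightarrow> ('k^'n) set" where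
  "orth_compl B W = {v. \<forall>w\<in>W. B w v = 0}"

definition witt_index :: "('k::field^'n \<Rightarrow> 'k^'n \<Rightarrow> 'k) \<Rightarrow> nat" where
  "witt_index B = Max {vec.dim W | W. vec.subspace W \<and> totally_isotropic B W}"

definition max_witt_index :: "('k::field^'n \<Rightarrow> 'k^'n \<Rightarrow> 'k) \<Rightarrow> bool" where
  "max_witt_index B \<longleftrightarrow> witt_index B = CARD('n) div 2"

definition acts_irreducibly :: "'k::field^'n^'n \<Rightarrow> bool" where
  "acts_irreducibly x \<longleftrightarrow>
     (\<forall>W. vec.subspace W \<and> invariant x W \<longrightarrow> W = {0} \<or> W = UNIV)"

end

theory Submission
  imports Defs "HOL-Computational_Algebra.Primes"
begin


lemma sesq_basic:
  assumes "sesquilinear \<sigma> B"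
  shows "B 0 v = 0" "B u 0 = 0" "B (-u) v = - B u v" "B u (-v) = - B u v"
    "B (u - w) v = B u v - B w v" "B u (v - w) = B u v - B u w"
proof -
  have a1: "B (u + u') v = B u v + B u' v" for u u' v using assms by (simp add: sesquilinear_def)
  have a2: "B u (v + v') = B u v + B u v'" for u v v' using assms by (simp add: sesquilinear_def)
  show z1: "B 0 v = 0" for v using a1[of 0 0 v] by (metis add.left_neutral add_cancel_right_right)
  show z2: "B u 0 = 0" for u using a2[of u 0 0] by (metis add.left_neutral add_cancel_right_right)
  show n1: "B (-u) v = - B u v" for u v
  proof -
    have "B u v + B (-u) v = 0" using a1[of u "-u" v] z1[of v] by simp
    then show ?thesis by (metis minus_unique)
  qed
  show n2: "B u (-v) = - B u v" for u v
  proof -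
    have "B u v + B u (-v) = 0" using a2[of u v "-v"] z2[of u] by simp
    then show ?thesis by (metis minus_unique)
  qed
  show "B (u - w) v = B u v - B w v" using a1[of u "-w" v] n1[of w v] by simp
  show "B u (v - w) = B u v - B u w" using a2[of u v "-w"] n2[of u w] by simp
qed

lemma form_refl:
  assumes "bil_or_herm_form \<sigma> B" "B u v = 0"
  shows "B v u = 0"
proof -
  have s: "sesquilinear \<sigma> B" using assms(1) unfolding bil_or_herm_form_def by blast
  have fi: "field_invol \<sigma>" using assms(1) unfolding bil_or_herm_form_def by blast
  have s0: "\<sigma> 0 = 0"
  proof -
    have "\<sigma> (0 + 0) = \<sigma> 0 + \<sigma> 0" using fi unfolding field_invol_def by blast
    then show ?thesis by (metis add.left_neutral add_cancel_right_right)
  qed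
  consider "\<forall>u v. B u v = B v u" | "\<forall>v. B v v = 0" | "\<forall>u v. B u v = \<sigma> (B v u)"
    using assms(1) unfolding bil_or_herm_form_def by blast
  then show ?thesis
  proof cases
    case 1 then show ?thesis using assms(2) by metis
  next
    case 2
    have a1: "B (u + u') v = B u v + B u' v" for u u' v using s by (simp add: sesquilinear_def)
    have a2: "B u (v + v') = B u v + B u v'" for u v v' using s by (simp add: sesquilinear_def)
    have "0 = B (u+v) (u+v)" using 2 by simp
    also have "\<dots> = B u u + B u v + (B v u + B v v)" by (simp add: a1 a2)
    finally show ?thesis using 2 assms(2) by simp
  next
    case 3
    then have "B v u = \<sigma> (B u v)" by metis
    then show ?thesis using assms(2) s0 by simp
  qed
qed

lemma sesq_span2:
  assumes "sesquilinear \<sigma> B" "\<forall>s\<in>S. B w s = 0" "v \<in> vec.span S"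
  shows "B w v = 0"
proof -
  have "vec.subspace {v. B w v = 0}"
    using assms(1) by (auto simp: vec.subspace_def sesquilinear_def sesq_basic[OF assms(1)])
  then have "vec.span S \<subseteq> {v. B w v = 0}"
    using assms(2) by (intro vec.span_minimal) auto
  then show ?thesis using assms(3) by auto
qed

lemma sesq_span1:
  assumes "sesquilinear \<sigma> B" "\<forall>s\<in>S. B s w = 0" "v \<in> vec.span S"
  shows "B v w = 0"
proof -
  have "vec.subspace {v. B v w = 0}"
    using assms(1) by (auto simp: vec.subspace_def sesquilinear_def sesq_basic[OF assms(1)])
  then have "vec.span S \<subseteq> {v. B v w = 0}"
    using assms(2) by (intro vec.span_minimal) auto
  then show ?thesis using assms(3) by auto
qed

definition lfun :: "('k::field^'n \<Rightarrow> 'k) \<Rightarrow> bool" where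
  "lfun f \<longleftrightarrow> (\<forall>u v. f (u+v) = f u + f v) \<and> (\<forall>c u. f (c *s u) = c * f u)"

lemma lfun_diff: assumes "lfun f" shows "f (u - v) = f u - f v"
proof -
  have "f u = f (u - v) + f v" using assms unfolding lfun_def by (metis diff_add_cancel)
  then show ?thesis by (simp add: eq_diff_eq)
qed

lemma lfun_zero: assumes "lfun f" shows "f 0 = 0"
  using assms unfolding lfun_def by (metis mult_zero_left vector_smult_lzero)

lemma kernel_step:
  fixes S :: "('k::field^'n) set"
  assumes "vec.subspace S" "lfun f"
  shows "vec.subspace (S \<inter> {v. f v = 0})" "vec.dim S \<le> vec.dim (S \<inter> {v. f v = 0}) + 1"
proof -
  show sub: "vec.subspace (S \<inter> {v. f v = 0})"
    using assms lfun_zero[OF assms(2)] by (auto simp: vec.subspace_def lfun_def)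
  let ?K = "S \<inter> {v. f v = 0}"
  show "vec.dim S \<le> vec.dim ?K + 1"
  proof (cases "\<forall>s\<in>S. f s = 0")
    case True
    then have "?K = S" by auto
    then show ?thesis by simp
  next
    case False
    then obtain s0 where s0: "s0 \<in> S" "f s0 \<noteq> 0" by auto
    have "S \<subseteq> vec.span (insert s0 ?K)"
    proof
      fix s assume s: "s \<in> S"
      define c where "c = f s / f s0"
      have "s - c *s s0 \<in> ?K"
        using s s0 assms lfun_diff[OF assms(2)] unfolding c_def
        by (auto simp: vec.subspace_def lfun_def vec.subspace_diff)
      then have "s - c *s s0 \<in> vec.span (insert s0 ?K)" by (meson insertI2 vec.span_base)
      moreover have "c *s s0 \<in> vec.span (insert s0 ?K)" by (simp add: vec.span_base vec.span_scale)
      ultimately have "(s - c *s s0) + c *s s0 \<in> vec.span (insert s0 ?K)" by (rule vec.span_add)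
      then show "s \<in> vec.span (insert s0 ?K)" by simp
    qed
    then have "vec.dim S \<le> vec.dim (insert s0 ?K)" by (rule vec.dim_mono)
    also have "\<dots> \<le> vec.dim ?K + 1" by (simp add: vec.dim_insert)
    finally show ?thesis .
  qed
qed

lemma kernel_many:
  fixes F :: "(('k::field^'n) \<Rightarrow> 'k) set"
  assumes "finite F"
  shows "\<forall>f\<in>F. lfun f \<Longrightarrow> vec.subspace S \<Longrightarrow> card F < vec.dim S \<Longrightarrow> \<exists>s\<in>S. s \<noteq> 0 \<and> (\<forall>f\<in>F. f s = 0)"
  using assms
proof (induction F arbitrary: S rule: finite_induct)
  case empty
  then have d0: "0 < vec.dim S" by simp
  have "\<not> S \<subseteq> {0}"
  proof
    assume "S \<subseteq> {0}"
    then have "vec.dim S \<le> vec.dim {0::'k^'n}" by (rule vec.dim_subset)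
    moreover have z: "vec.dim {0::'k^'n} = 0" by simp
    ultimately show False using d0 by linarith
  qed
  then show ?case by auto
next
  case (insert f F)
  let ?K = "S \<inter> {v. f v = 0}"
  have lf: "lfun f" using insert by auto
  have "vec.subspace ?K" "vec.dim S \<le> vec.dim ?K + 1" using kernel_step[OF insert(5) lf] by auto
  moreover have "card F < vec.dim ?K" using insert \<open>vec.dim S \<le> vec.dim ?K + 1\<close> by simp
  ultimately obtain s where s: "s \<in> ?K" "s \<noteq> 0" "\<forall>g\<in>F. g s = 0" using insert(3) insert(4) by blast
  have "s \<in> S" "f s = 0" using s(1) by auto
  then show ?case using s(2,3) by blast
qed

lemma dim_UNIV_vec: "vec.dim (UNIV :: ('k::field^'n) set) = CARD('n)"
  by (simp add: card_cart_basis)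

lemma complement_exists:
  fixes U :: "('k::field^'n) set"
  assumes "vec.subspace U"
  shows "\<exists>C. vec.subspace C \<and> U \<inter> C = {0} \<and> (\<forall>v. \<exists>u\<in>U. \<exists>c\<in>C. v = u + c)
           \<and> vec.dim U + vec.dim C = CARD('n)"
proof -
  obtain Bu where Bu: "Bu \<subseteq> U" "vec.independent Bu" "U \<subseteq> vec.span Bu" "card Bu = vec.dim U"
    by (rule vec.basis_exists)
  obtain Bv where Bv: "Bu \<subseteq> Bv" "Bv \<subseteq> UNIV" "vec.independent Bv" "UNIV \<subseteq> vec.span Bv"
    by (rule vec.maximal_independent_subset_extend[OF subset_UNIV Bu(2)])
  have fin: "finite Bv" using Bv(3) vec.finiteI_independent by blast
  define C where "C = vec.span (Bv - Bu)"
  have spU: "vec.span Bu = U" using Bu assms by (simp add: vec.span_subspace)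
  have subC: "vec.subspace C" by (simp add: C_def vec.subspace_span)
  have sum: "{x + y |x y. x \<in> U \<and> y \<in> C} = UNIV"
  proof -
    have e: "Bu \<union> (Bv - Bu) = Bv" using Bv(1) by blast
    have "vec.span (Bu \<union> (Bv - Bu)) = UNIV" unfolding e using Bv(4) by blast
    then show ?thesis unfolding vec.span_Un spU C_def by simp
  qed
  have dC: "vec.dim C \<le> card Bv - card Bu"
  proof -
    have "vec.dim C \<le> card (Bv - Bu)" unfolding C_def
      using vec.dim_le_card[OF vec.span_superset[of "Bv - Bu"]] fin by auto
    also have "\<dots> = card Bv - card Bu" using fin Bv(1) by (simp add: card_Diff_subset finite_subset)
    finally show ?thesis .
  qed
  have cBv: "card Bv = CARD('n)"
  proof -
    have "vec.span Bv = UNIV" using Bv(4) by blast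
    then have "vec.dim Bv = CARD('n)" using dim_UNIV_vec[where 'k='k and 'n='n] vec.dim_span[of Bv] by simp
    then show ?thesis using vec.dim_eq_card_independent[OF Bv(3)] by simp
  qed
  have ds: "vec.dim {x + y |x y. x \<in> U \<and> y \<in> C} + vec.dim (U \<inter> C) = vec.dim U + vec.dim C"
    by (rule vec.dim_sums_Int[OF assms subC])
  have cBu: "card Bu \<le> card Bv" using fin Bv(1) by (simp add: card_mono)
  have ds': "CARD('n) + vec.dim (U \<inter> C) = vec.dim U + vec.dim C"
    using ds sum dim_UNIV_vec[where 'k='k and 'n='n] by simp
  have "vec.dim (U \<inter> C) = 0" using ds' dC cBv Bu(4) cBu by linarith
  then have "U \<inter> C \<subseteq> {0}" by simp
  moreover have "0 \<in> U \<inter> C" using assms subC vec.subspace_0 by auto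
  ultimately have "U \<inter> C = {0}" by auto
  moreover have "vec.dim U + vec.dim C = CARD('n)"
    using ds sum \<open>vec.dim (U \<inter> C) = 0\<close> dim_UNIV_vec[where 'k='k and 'n='n] by simp
  moreover have "\<forall>v. \<exists>u\<in>U. \<exists>c\<in>C. v = u + c" using sum by blast
  ultimately show ?thesis using subC by blast
qed



lemma mpow_add: "mpow x (a + b) = mpow x a ** mpow x b"
  by (induction a) (simp_all add: matrix_mul_assoc)

lemma mpow_Suc': "mpow x (Suc n) = mpow x n ** x"
  using mpow_add[of x n 1] by simp

lemma mpow_mult: "mpow x (a * b) = mpow (mpow x a) b"
  by (induction b) (simp_all add: mpow_add)

lemma mpow_vec: "mpow x a *v (mpow x b *v v) = mpow x (a + b) *v v"
  by (simp add: matrix_vector_mul_assoc mpow_add)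

lemma mpow_inv:
  assumes "x' ** x = mat 1"
  shows "mpow x' n ** mpow x n = mat 1"
proof (induction n)
  case 0 then show ?case by simp
next
  case (Suc n)
  have "mpow x' (Suc n) ** mpow x (Suc n) = (x' ** mpow x' n) ** (mpow x n ** x)"
    by (metis mpow.simps(2) mpow_Suc')
  also have "\<dots> = x' ** ((mpow x' n ** mpow x n) ** x)" by (simp only: matrix_mul_assoc)
  also have "\<dots> = mat 1" using Suc assms by simp
  finally show ?case .
qed

lemma order_exists:
  fixes x :: "'k::{field,finite}^'n^'n"
  assumes "invertible x"
  shows "\<exists>m>0. mpow x m = mat 1"
proof -
  obtain x' where x': "x' ** x = mat 1" using assms unfolding invertible_def by blast
  have "\<not> inj (mpow x)"
  proof
    assume "inj (mpow x)"
    then have "finite (UNIV :: nat set)"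
      using finite_imageD[of "mpow x" UNIV] by simp
    then show False by simp
  qed
  then obtain i j where ij: "i \<noteq> j" "mpow x i = mpow x j" unfolding inj_def by blast
  have "\<exists>i j. i < j \<and> mpow x i = mpow x j"
    using ij by (metis linorder_neqE_nat)
  then obtain i j where ij: "i < j" "mpow x i = mpow x j" by blast
  have "mpow x j = mpow x i ** mpow x (j - i)" using ij(1) mpow_add[of x i "j - i"] by simp
  then have "mpow x' i ** mpow x i = mpow x' i ** (mpow x i ** mpow x (j - i))" using ij(2) by simp
  then have "mpow x (j - i) = mat 1" using mpow_inv[OF x', of i] by (simp add: matrix_mul_assoc)
  then show ?thesis using ij(1) by (intro exI[of _ "j - i"]) simp
qed

lemma elem_order_props:
  fixes x :: "'k::{field,finite}^'n^'n"
  assumes "invertible x"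
  shows "0 < elem_order x" "mpow x (elem_order x) = mat 1"
proof -
  have "\<exists>m. 0 < m \<and> mpow x m = mat 1" using order_exists[OF assms] by blast
  then have "0 < elem_order x \<and> mpow x (elem_order x) = mat 1"
    unfolding elem_order_def by (rule LeastI_ex)
  then show "0 < elem_order x" "mpow x (elem_order x) = mat 1" by auto
qed

lemma invariant_mpow:
  assumes "invariant x U" "u \<in> U"
  shows "mpow x j *v u \<in> U"
proof (induction j)
  case 0 then show ?case using assms by simp
next
  case (Suc j)
  have "mpow x (Suc j) *v u = x *v (mpow x j *v u)" by (simp add: matrix_vector_mul_assoc)
  then show ?case using Suc assms(1) unfolding invariant_def by auto
qed

lemma ofnat_times_vec: "(of_nat m :: 'k::field^'n) * u = (of_nat m :: 'k) *s u"
  by (simp add: vec_eq_iff of_nat_index)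

lemma sum_const_vec: "(\<Sum>i<m. u) = (of_nat m :: 'k::field) *s (u :: 'k^'n)"
  by (simp add: ofnat_times_vec)


lemma maschke:
  fixes x :: "'k::field^'n^'n" and U :: "('k^'n) set"
  assumes m0: "0 < m" and xm: "mpow x m = mat 1" and mk: "of_nat m \<noteq> (0::'k)"
    and sU: "vec.subspace U" and iU: "invariant x U"
  shows "\<exists>W. vec.subspace W \<and> invariant x W \<and> U \<inter> W = {0} \<and> (\<forall>v. \<exists>u\<in>U. \<exists>w\<in>W. v = u + w)"
proof -
  obtain C where C: "vec.subspace C" "U \<inter> C = {0}" "\<forall>v. \<exists>u\<in>U. \<exists>c\<in>C. v = u + c"
    using complement_exists[OF sU] by blast
  have uniq: "u1 = u2" if "u1 \<in> U" "v - u1 \<in> C" "u2 \<in> U" "v - u2 \<in> C" for v u1 u2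
  proof -
    have "u1 - u2 \<in> U" using that sU by (simp add: vec.subspace_diff)
    moreover have "u1 - u2 \<in> C" using vec.subspace_diff[OF C(1) that(4) that(2)] by simp
    ultimately have "u1 - u2 \<in> U \<inter> C" by blast
    then have "u1 - u2 = 0" using C(2) by blast
    then show ?thesis by simp
  qed
  have ex: "\<exists>u. u \<in> U \<and> v - u \<in> C" for v
  proof -
    obtain u c where "u \<in> U" "c \<in> C" "v = u + c" using C(3) by blast
    then show ?thesis by (intro exI[of _ u]) simp
  qed
  define P where "P v = (THE u. u \<in> U \<and> v - u \<in> C)" for v
  have P: "P v \<in> U \<and> v - P v \<in> C" for v
  proof -
    have "\<exists>!u. u \<in> U \<and> v - u \<in> C" using ex[of v] uniq by blast
    then show ?thesis unfolding P_def by (rule theI')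
  qed
  have Pchar: "P v = u" if "u \<in> U" "v - u \<in> C" for v u
    using uniq[OF _ _ that] P[of v] by blast
  have PU: "P u = u" if "u \<in> U" for u
    using Pchar[OF that] C(1) by (simp add: vec.subspace_0)
  have Padd: "P (a + b) = P a + P b" for a b
  proof (rule Pchar)
    show "P a + P b \<in> U" using P sU by (simp add: vec.subspace_add)
    have "a + b - (P a + P b) = (a - P a) + (b - P b)" by simp
    then show "a + b - (P a + P b) \<in> C" using P C(1) by (metis vec.subspace_add)
  qed
  have Pscale: "P (c *s a) = c *s P a" for c a
  proof (rule Pchar)
    show "c *s P a \<in> U" using P sU by (simp add: vec.subspace_scale)
    have "c *s a - c *s P a = c *s (a - P a)" by (simp add: vector_ssub_ldistrib)
    then show "c *s a - c *s P a \<in> C" using P C(1) by (metis vec.subspace_scale)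
  qed
  define c where "c = inverse (of_nat m :: 'k)"
  define Q where "Q v = c *s (\<Sum>i<m. mpow x (m - i) *v P (mpow x i *v v))" for v
  have QU: "Q v \<in> U" for v
    unfolding Q_def
    by (intro vec.subspace_scale[OF sU] vec.subspace_sum[OF sU] ballI invariant_mpow[OF iU] P[THEN conjunct1])
  have Qid: "Q u = u" if "u \<in> U" for u
  proof -
    have "mpow x (m - i) *v P (mpow x i *v u) = u" if "i < m" for i
    proof -
      have "P (mpow x i *v u) = mpow x i *v u" using PU invariant_mpow[OF iU \<open>u \<in> U\<close>] by blast
      then show ?thesis using that xm by (simp add: mpow_vec)
    qed
    then have "(\<Sum>i<m. mpow x (m - i) *v P (mpow x i *v u)) = (\<Sum>i<m. u)" by simp
    then have "Q u = (c * of_nat m) *s u" unfolding Q_def by (simp add: ofnat_times_vec vector_smult_assoc)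
    then show ?thesis using mk by (simp add: c_def)
  qed
  have Qadd: "Q (a + b) = Q a + Q b" for a b
    unfolding Q_def by (simp add: vec.add Padd sum.distrib vector_add_ldistrib)
  have Qscale: "Q (d *s a) = d *s Q a" for d a
  proof -
    have "Q (d *s a) = c *s (\<Sum>i<m. d *s (mpow x (m - i) *v P (mpow x i *v a)))"
      unfolding Q_def by (simp add: vec.scale Pscale)
    also have "\<dots> = c *s (d *s (\<Sum>i<m. mpow x (m - i) *v P (mpow x i *v a)))"
      by (simp add: vec.scale_sum_right)
    also have "\<dots> = d *s Q a" unfolding Q_def by (simp add: vector_smult_assoc mult.commute)
    finally show ?thesis .
  qed
  have Qx: "Q (x *v v) = x *v Q v" for v
  proof -
    define f where "f i = mpow x (Suc m - i) *v P (mpow x i *v v)" for i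
    have xm': "mpow x m *v w = w" for w using xm by simp
    have lhs: "(\<Sum>i<m. mpow x (m - i) *v P (mpow x i *v (x *v v))) = (\<Sum>i<m. f (Suc i))"
    proof (rule sum.cong[OF refl])
      fix i assume "i \<in> {..<m}"
      have "mpow x i *v (x *v v) = mpow x (Suc i) *v v"
        by (metis matrix_vector_mul_assoc mpow_Suc')
      then show "mpow x (m - i) *v P (mpow x i *v (x *v v)) = f (Suc i)" by (simp add: f_def)
    qed
    have rhs: "x *v (\<Sum>i<m. mpow x (m - i) *v P (mpow x i *v v)) = (\<Sum>i<m. f i)"
    proof -
      have "x *v (\<Sum>i<m. mpow x (m - i) *v P (mpow x i *v v)) = (\<Sum>i<m. x *v (mpow x (m - i) *v P (mpow x i *v v)))"
        by (simp add: vec.sum)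
      also have "\<dots> = (\<Sum>i<m. f i)"
      proof (rule sum.cong[OF refl])
        fix i assume "i \<in> {..<m}"
        then have "Suc m - i = Suc (m - i)" by auto
        then show "x *v (mpow x (m - i) *v P (mpow x i *v v)) = f i"
          by (simp add: f_def matrix_vector_mul_assoc)
      qed
      finally show ?thesis .
    qed
    have "(\<Sum>i<Suc m. f i) = f 0 + (\<Sum>i<m. f (Suc i))" by (rule sum.lessThan_Suc_shift)
    moreover have "(\<Sum>i<Suc m. f i) = (\<Sum>i<m. f i) + f m" by simp
    moreover have "f 0 = f m"
    proof -
      have "f 0 = x *v P v" unfolding f_def by (simp add: xm)
      moreover have "f m = x *v P v" unfolding f_def by (simp add: xm)
      ultimately show ?thesis by simp
    qed
    ultimately have "(\<Sum>i<m. f (Suc i)) = (\<Sum>i<m. f i)" by (simp add: add.commute)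
    then show ?thesis unfolding Q_def using lhs rhs by (simp add: vec.scale)
  qed
  define W where "W = {v. Q v = 0}"
  have Q0: "Q 0 = 0" using Qscale[of 0 0] by simp
  have sW: "vec.subspace W"
    unfolding W_def vec.subspace_def using Q0 by (auto simp: Qadd Qscale)
  have iW: "invariant x W" unfolding invariant_def W_def by (auto simp: Qx)
  have UW: "U \<inter> W = {0}"
  proof -
    have "U \<inter> W \<subseteq> {0}" unfolding W_def using Qid by auto
    moreover have "0 \<in> U \<inter> W" using sU sW by (simp add: vec.subspace_0)
    ultimately show ?thesis by auto
  qed
  have "\<forall>v. \<exists>u\<in>U. \<exists>w\<in>W. v = u + w"
  proof
    fix v
    have "Q (v - Q v) = Q v - Q (Q v)"
      using Qadd[of "v - Q v" "Q v"] by (simp add: eq_diff_eq)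
    also have "\<dots> = 0" using Qid[OF QU[of v]] by simp
    finally have "v - Q v \<in> W" unfolding W_def by simp
    then show "\<exists>u\<in>U. \<exists>w\<in>W. v = u + w" using QU[of v] by (intro bexI[of _ "Q v"] bexI[of _ "v - Q v"]) auto
  qed
  then show ?thesis using sW iW UW by blast
qed



lemma form_sesq: "bil_or_herm_form \<sigma> B \<Longrightarrow> sesquilinear \<sigma> B"
  unfolding bil_or_herm_form_def by blast

lemma lfun_B: "sesquilinear \<sigma> B \<Longrightarrow> lfun (\<lambda>v. B v c)"
  unfolding lfun_def sesquilinear_def by blast

lemma orth_subspace:
  assumes "sesquilinear \<sigma> B"
  shows "vec.subspace (orth_compl B W)"
  unfolding vec.subspace_def orth_compl_def
  using assms sesq_basic(2)[OF assms] by (simp add: sesquilinear_def)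

lemma orth_invariant:
  assumes x_in: "x \<in> similarities B" and m0: "0 < m" and xm: "mpow x m = mat 1"
    and iW: "invariant x W"
  shows "invariant x (orth_compl B W)"
  unfolding invariant_def
proof clarify
  fix v assume v: "v \<in> orth_compl B W"
  obtain c where c: "\<forall>u v. B (x *v u) (x *v v) = c * B u v" using x_in unfolding similarities_def by blast
  show "x *v v \<in> orth_compl B W"
    unfolding orth_compl_def
  proof clarify
    fix w assume w: "w \<in> W"
    define w' where "w' = mpow x (m - 1) *v w"
    have w'W: "w' \<in> W" unfolding w'_def by (rule invariant_mpow[OF iW w])
    have "x *v w' = mpow x (Suc (m - 1)) *v w" unfolding w'_def by (simp add: matrix_vector_mul_assoc)
    also have "Suc (m - 1) = m" using m0 by simp
    finally have xw: "x *v w' = w" using xm by simp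
    have "B w (x *v v) = c * B w' v" using c xw by metis
    also have "B w' v = 0" using v w'W unfolding orth_compl_def by blast
    finally show "B w (x *v v) = 0" by simp
  qed
qed

lemma witt_bound:
  fixes B :: "'k::field^'n \<Rightarrow> 'k^'n \<Rightarrow> 'k"
  assumes form: "bil_or_herm_form \<sigma> B" and nd: "nondegenerate_form B"
    and sT: "vec.subspace T" and ti: "totally_isotropic B T"
  shows "2 * vec.dim T \<le> CARD('n)"
proof -
  have s: "sesquilinear \<sigma> B" using form by (rule form_sesq)
  obtain C where C: "vec.subspace C" "T \<inter> C = {0}" "\<forall>v. \<exists>u\<in>T. \<exists>c\<in>C. v = u + c"
      "vec.dim T + vec.dim C = CARD('n)"
    using complement_exists[OF sT] by blast
  obtain Bc where Bc: "Bc \<subseteq> C" "vec.independent Bc" "C \<subseteq> vec.span Bc" "card Bc = vec.dim C"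
    by (rule vec.basis_exists)
  have fin: "finite Bc" using Bc(2) vec.finiteI_independent by blast
  have "\<not> vec.dim C < vec.dim T"
  proof
    assume lt: "vec.dim C < vec.dim T"
    define F where "F = (\<lambda>c v. B v c) ` Bc"
    have "card F \<le> card Bc" unfolding F_def using fin by (rule card_image_le)
    then have "card F < vec.dim T" using lt Bc(4) by simp
    moreover have "\<forall>f\<in>F. lfun f" unfolding F_def using lfun_B[OF s] by blast
    moreover have "finite F" unfolding F_def using fin by simp
    ultimately obtain t where t: "t \<in> T" "t \<noteq> 0" "\<forall>f\<in>F. f t = 0"
      using kernel_many[of F T] sT by blast
    have tBc: "\<forall>b\<in>Bc. B t b = 0" using t(3) unfolding F_def by auto
    have "B t v = 0" for v
    proof -
      obtain u c where uc: "u \<in> T" "c \<in> C" "v = u + c" using C(3) by blast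
      have "B t u = 0" using ti t(1) uc(1) unfolding totally_isotropic_def by blast
      moreover have "B t c = 0" using sesq_span2[OF s tBc] Bc(3) uc(2) by blast
      ultimately show ?thesis using uc(3) s unfolding sesquilinear_def by simp
    qed
    then have "t = 0" using nd unfolding nondegenerate_form_def by blast
    then show False using t(2) by simp
  qed
  then show ?thesis using C(4) by simp
qed

lemma perp_lower:
  fixes B :: "'k::field^'n \<Rightarrow> 'k^'n \<Rightarrow> 'k"
  assumes form: "bil_or_herm_form \<sigma> B" and sT: "vec.subspace T"
  shows "CARD('n) \<le> vec.dim T + vec.dim (orth_compl B T)"
proof -
  have s: "sesquilinear \<sigma> B" using form by (rule form_sesq)
  have sP: "vec.subspace (orth_compl B T)" by (rule orth_subspace[OF s])
  obtain C where C: "vec.subspace C" "orth_compl B T \<inter> C = {0}"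
      "vec.dim (orth_compl B T) + vec.dim C = CARD('n)"
    using complement_exists[OF sP] by blast
  obtain Bt where Bt: "Bt \<subseteq> T" "vec.independent Bt" "T \<subseteq> vec.span Bt" "card Bt = vec.dim T"
    by (rule vec.basis_exists)
  have fin: "finite Bt" using Bt(2) vec.finiteI_independent by blast
  have "\<not> vec.dim T < vec.dim C"
  proof
    assume lt: "vec.dim T < vec.dim C"
    define F where "F = (\<lambda>b v. B v b) ` Bt"
    have "card F \<le> card Bt" unfolding F_def using fin by (rule card_image_le)
    then have "card F < vec.dim C" using lt Bt(4) by simp
    moreover have "\<forall>f\<in>F. lfun f" unfolding F_def using lfun_B[OF s] by blast
    moreover have "finite F" unfolding F_def using fin by simp
    ultimately obtain c where c: "c \<in> C" "c \<noteq> 0" "\<forall>f\<in>F. f c = 0"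
      using kernel_many[of F C] C(1) by blast
    have cBt: "\<forall>b\<in>Bt. B c b = 0" using c(3) unfolding F_def by auto
    have "B t c = 0" if "t \<in> T" for t
    proof -
      have "B c t = 0" using sesq_span2[OF s cBt] Bt(3) that by blast
      then show ?thesis using form_refl[OF form] by blast
    qed
    then have "c \<in> orth_compl B T" unfolding orth_compl_def by blast
    then have "c = 0" using C(2) c(1) by blast
    then show False using c(2) by simp
  qed
  then show ?thesis using C(3) by simp
qed

lemma max_witt:
  fixes B :: "'k::field^'n \<Rightarrow> 'k^'n \<Rightarrow> 'k"
  assumes form: "bil_or_herm_form \<sigma> B" and nd: "nondegenerate_form B"
    and sT: "vec.subspace T" and ti: "totally_isotropic B T" and d: "2 * vec.dim T = CARD('n)"
  shows "max_witt_index B"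
proof -
  define S where "S = {vec.dim W | W :: ('k^'n) set. vec.subspace W \<and> totally_isotropic B W}"
  have le: "y \<le> CARD('n) div 2" if "y \<in> S" for y
    using that witt_bound[OF form nd] unfolding S_def by fastforce
  have "S \<subseteq> {..CARD('n) div 2}" using le by auto
  then have "finite S" by (rule finite_subset) simp
  moreover have "CARD('n) div 2 \<in> S" unfolding S_def using sT ti d by force
  ultimately have "Max S = CARD('n) div 2" using le by (intro Max_eqI) auto
  then show ?thesis unfolding max_witt_index_def witt_index_def S_def by simp
qed



lemma nondeg_case:
  fixes B :: "'k::field^'n \<Rightarrow> 'k^'n \<Rightarrow> 'k" and x :: "'k^'n^'n"
  assumes form: "bil_or_herm_form \<sigma> B" and nd: "nondegenerate_form B"
    and x_in: "x \<in> similarities B" and m0: "0 < m" and xm: "mpow x m = mat 1"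
    and mk: "of_nat m \<noteq> (0::'k)"
    and sU: "vec.subspace U" and iU: "invariant x U" and U0: "U \<noteq> {0}" and UV: "U \<noteq> UNIV"
  shows "(\<exists>W. vec.subspace W \<and> W \<noteq> {0} \<and> W \<noteq> UNIV \<and> nondegenerate_subspace B W \<and>
           invariant x W \<and> invariant x (orth_compl B W))
    \<or> (max_witt_index B \<and>
        (\<exists>W. vec.subspace W \<and> totally_isotropic B W \<and> 2 * vec.dim W = CARD('n) \<and>
           invariant x W))"
proof -
  have s: "sesquilinear \<sigma> B" using form by (rule form_sesq)
  have add1: "B (u + u') v = B u v + B u' v" for u u' v using s unfolding sesquilinear_def by blast
  have add2: "B u (v + v') = B u v + B u v'" for u v v' using s unfolding sesquilinear_def by blast
  define P where "P = orth_compl B U"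
  have sP: "vec.subspace P" unfolding P_def by (rule orth_subspace[OF s])
  have iP: "invariant x P" unfolding P_def by (rule orth_invariant[OF x_in m0 xm iU])
  define R where "R = U \<inter> P"
  show ?thesis
  proof (cases "R = {0}")
    case True
    have "nondegenerate_subspace B U"
      unfolding nondegenerate_subspace_def
    proof clarify
      fix u assume u: "u \<in> U" "\<forall>v\<in>U. B u v = 0"
      then have "\<forall>v\<in>U. B v u = 0" using form_refl[OF form] by blast
      then have "u \<in> P" unfolding P_def orth_compl_def by blast
      then show "u = 0" using True u(1) unfolding R_def by blast
    qed
    then show ?thesis using sU U0 UV iU orth_invariant[OF x_in m0 xm iU] by blast
  next
    case False
    define T where "T = R"
    have sT: "vec.subspace T" unfolding T_def R_def using sU sP by (rule vec.subspace_inter)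
    have iT: "invariant x T" using iU iP unfolding T_def R_def invariant_def by blast
    have tiT: "totally_isotropic B T"
      unfolding totally_isotropic_def T_def R_def P_def orth_compl_def by blast
    have T0: "T \<noteq> {0}" using False unfolding T_def .
    define Tp where "Tp = orth_compl B T"
    have sTp: "vec.subspace Tp" unfolding Tp_def by (rule orth_subspace[OF s])
    have iTp: "invariant x Tp" unfolding Tp_def by (rule orth_invariant[OF x_in m0 xm iT])
    obtain T' where T': "vec.subspace T'" "invariant x T'" "Tp \<inter> T' = {0}"
        "\<forall>v. \<exists>y\<in>Tp. \<exists>c\<in>T'. v = y + c"
      using maschke[OF m0 xm mk sTp iTp] by blast
    have TTp: "T \<subseteq> Tp" using tiT unfolding Tp_def orth_compl_def totally_isotropic_def by blast
    define W where "W = vec.span (T \<union> T')"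
    have memW: "W = {a + b | a b. a \<in> T \<and> b \<in> T'}"
    proof -
      have e: "vec.span T = T" "vec.span T' = T'" using sT T'(1) by simp_all
      show ?thesis unfolding W_def vec.span_Un e by (rule refl)
    qed
    have sW: "vec.subspace W" unfolding W_def by (rule vec.subspace_span)
    have iW: "invariant x W"
      unfolding invariant_def memW
    proof clarify
      fix a b assume ab: "a \<in> T" "b \<in> T'"
      have "x *v a \<in> T" "x *v b \<in> T'" using ab iT T'(2) unfolding invariant_def by auto
      then show "\<exists>a' b'. x *v (a + b) = a' + b' \<and> a' \<in> T \<and> b' \<in> T'"
        by (intro exI[of _ "x *v a"] exI[of _ "x *v b"]) (simp add: vec.add)
    qed
    have TW: "T \<subseteq> W" unfolding W_def by (meson Un_upper1 subset_trans vec.span_superset)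
    have T'W: "T' \<subseteq> W" unfolding W_def by (meson Un_upper2 subset_trans vec.span_superset)
    have W0: "W \<noteq> {0}" using T0 TW sT vec.subspace_0 by blast
    have ndW: "nondegenerate_subspace B W"
      unfolding nondegenerate_subspace_def
    proof clarify
      fix w assume w: "w \<in> W" "\<forall>v\<in>W. B w v = 0"
      obtain a b where ab: "a \<in> T" "b \<in> T'" "w = a + b" using w(1) unfolding memW by blast
      have "B b t = 0" if "t \<in> T" for t
      proof -
        have "B w t = 0" using w(2) TW that by blast
        moreover have "B a t = 0" using tiT ab(1) that unfolding totally_isotropic_def by blast
        ultimately show ?thesis using ab(3) add1 by simp
      qed
      then have "b \<in> Tp" unfolding Tp_def orth_compl_def using form_refl[OF form] by blast
      then have "b = 0" using T'(3) ab(2) by blast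
      then have wa: "w = a" using ab(3) by simp
      have "B a v = 0" for v
      proof -
        obtain y c where yc: "y \<in> Tp" "c \<in> T'" "v = y + c" using T'(4) by blast
        have "B a y = 0" using yc(1) ab(1) unfolding Tp_def orth_compl_def by blast
        moreover have "B a c = 0" using w(2) wa T'W yc(2) by blast
        ultimately show ?thesis using yc(3) add2 by simp
      qed
      then have "a = 0" using nd unfolding nondegenerate_form_def by blast
      then show "w = 0" using wa by simp
    qed
    show ?thesis
    proof (cases "W = UNIV")
      case False
      then show ?thesis using sW W0 ndW iW orth_invariant[OF x_in m0 xm iW] by blast
    next
      case True
      have "Tp \<subseteq> T"
      proof
        fix y assume y: "y \<in> Tp"
        obtain a b where ab: "a \<in> T" "b \<in> T'" "y = a + b" using True unfolding memW by blast
        have "b = y - a" using ab(3) by simp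
        moreover have "y - a \<in> Tp" using vec.subspace_diff[OF sTp y] TTp ab(1) by blast
        ultimately have "b \<in> Tp" by simp
        then have "b = 0" using T'(3) ab(2) by blast
        then show "y \<in> T" using ab by simp
      qed
      then have "vec.dim Tp \<le> vec.dim T" by (rule vec.dim_subset)
      moreover have "CARD('n) \<le> vec.dim T + vec.dim Tp" unfolding Tp_def by (rule perp_lower[OF form sT])
      moreover have "2 * vec.dim T \<le> CARD('n)" by (rule witt_bound[OF form nd sT tiT])
      ultimately have d: "2 * vec.dim T = CARD('n)" by linarith
      have "max_witt_index B" by (rule max_witt[OF form nd sT tiT d])
      then show ?thesis using sT tiT d iT by blast
    qed
  qed
qed



lemma binom_mv:
  fixes A :: "'k::field^'n^'n"
  shows "mpow (A + mat 1) n *v v = (\<Sum>i\<le>n. of_nat (n choose i) *s (mpow A i *v v))"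
proof (induction n)
  case 0 then show ?case by simp
next
  case (Suc n)
  define g where "g i = mpow A i *v v" for i
  define Sx where "Sx = mpow (A + mat 1) n *v v"
  have IH: "Sx = (\<Sum>i\<le>n. of_nat (n choose i) *s g i)" using Suc unfolding g_def Sx_def by simp
  have e1: "mpow (A + mat 1) (Suc n) *v v = A *v Sx + Sx"
    unfolding Sx_def by (simp add: matrix_vector_mul_assoc[symmetric] matrix_vector_mult_add_rdistrib)
  have e2: "A *v Sx = (\<Sum>i\<le>n. of_nat (n choose i) *s g (Suc i))"
    unfolding IH by (simp add: vec.sum vec.scale g_def matrix_vector_mul_assoc)
  have e3: "Sx = g 0 + (\<Sum>i\<le>n. of_nat (n choose Suc i) *s g (Suc i))"
  proof -
    have "(\<Sum>i\<le>n. of_nat (n choose i) *s g i) = (\<Sum>i\<le>Suc n. of_nat (n choose i) *s g i)" by (simp add: binomial_eq_0)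
    also have "\<dots> = of_nat (n choose 0) *s g 0 + (\<Sum>i\<le>n. of_nat (n choose Suc i) *s g (Suc i))"
      by (rule sum.atMost_Suc_shift)
    finally show ?thesis unfolding IH by simp
  qed
  have e4: "(\<Sum>i\<le>n. of_nat (n choose i) *s g (Suc i)) + (g 0 + (\<Sum>i\<le>n. of_nat (n choose Suc i) *s g (Suc i)))
      = of_nat (Suc n choose 0) *s g 0 + (\<Sum>i\<le>n. of_nat (Suc n choose Suc i) *s g (Suc i))"
    by (simp add: sum.distrib vector_sadd_rdistrib add_ac)
  have e5: "of_nat (Suc n choose 0) *s g 0 + (\<Sum>i\<le>n. of_nat (Suc n choose Suc i) *s g (Suc i))
      = (\<Sum>i\<le>Suc n. of_nat (Suc n choose i) *s g i)"
    by (rule sum.atMost_Suc_shift[symmetric])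
  show ?case using e1 e2 e3 e4 e5 unfolding g_def by metis
qed

lemma frob_mat:
  fixes A :: "'k::field^'n^'n"
  assumes pp: "prime p" and pc: "CHAR('k) = p"
  shows "mpow (A + mat 1) p = mpow A p + mat 1"
proof -
  have "mpow (A + mat 1) p *v v = (mpow A p + mat 1) *v v" for v
  proof -
    define f where "f i = (of_nat (p choose i) :: 'k) *s (mpow A i *v v)" for i
    have "mpow (A + mat 1) p *v v = (\<Sum>i\<le>p. f i)" unfolding f_def by (rule binom_mv)
    also have "\<dots> = (\<Sum>i\<in>{0, p}. f i)"
    proof (rule sum.mono_neutral_right)
      show "finite {..p}" by simp
      show "{0, p} \<subseteq> {..p}" by auto
      show "\<forall>i\<in>{..p} - {0, p}. f i = 0"
      proof
        fix i assume i: "i \<in> {..p} - {0, p}"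
        then have "p dvd (p choose i)" using pp by (intro dvd_choose_prime) auto
        then have "(of_nat (p choose i) :: 'k) = 0" using pc by (simp add: of_nat_eq_0_iff_char_dvd)
        then show "f i = 0" unfolding f_def by simp
      qed
    qed
    also have "\<dots> = f 0 + f p" using pp by (simp add: prime_gt_0_nat)
    also have "\<dots> = v + mpow A p *v v" unfolding f_def by simp
    finally show ?thesis by (simp add: matrix_vector_mult_add_rdistrib add.commute)
  qed
  then show ?thesis by (simp add: matrix_eq)
qed

lemma frob_pow:
  fixes A :: "'k::field^'n^'n"
  assumes pp: "prime p" and pc: "CHAR('k) = p"
  shows "mpow (A + mat 1) (p ^ k) = mpow A (p ^ k) + mat 1"
proof (induction k arbitrary: A)
  case 0 then show ?case by simp
next
  case (Suc k)
  have "mpow (A + mat 1) (p ^ Suc k) = mpow (mpow (A + mat 1) (p ^ k)) p"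
    by (simp only: mpow_mult power_Suc2)
  also have "\<dots> = mpow (mpow A (p ^ k) + mat 1) p" using Suc by simp
  also have "\<dots> = mpow (mpow A (p ^ k)) p + mat 1" by (rule frob_mat[OF pp pc])
  also have "\<dots> = mpow A (p ^ Suc k) + mat 1" by (simp only: mpow_mult power_Suc2)
  finally show ?case .
qed

lemma unip_fixed:
  fixes x :: "'k::field^'n^'n"
  assumes pp: "prime p" and pc: "CHAR('k) = p" and xm: "mpow x (p ^ k) = mat 1"
  shows "\<exists>v. v \<noteq> 0 \<and> x *v v = v"
proof (rule ccontr)
  assume no: "\<not> (\<exists>v. v \<noteq> 0 \<and> x *v v = v)"
  define A where "A = x - mat 1"
  have xA: "x = A + mat 1" unfolding A_def by simp
  have "mpow A (p ^ k) + mat 1 = mat 1" using frob_pow[OF pp pc, of A k] xm xA by simp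
  then have A0: "mpow A (p ^ k) = 0" by simp
  have Anz: "A *v w \<noteq> 0" if "w \<noteq> 0" for w
  proof
    assume "A *v w = 0"
    then have "x *v w = w" unfolding A_def by (simp add: matrix_vector_mult_diff_rdistrib)
    then show False using no that by blast
  qed
  have pownz: "mpow A j *v w \<noteq> 0" if "w \<noteq> 0" for w j
  proof (induction j)
    case 0 then show ?case using that by simp
  next
    case (Suc j)
    have "mpow A (Suc j) *v w = A *v (mpow A j *v w)" by (simp add: matrix_vector_mul_assoc)
    then show ?case using Anz Suc by simp
  qed
  define w :: "'k^'n" where "w = axis undefined 1"
  have "w \<noteq> 0" unfolding w_def by (simp add: vec_eq_iff axis_def)
  then have "mpow A (p ^ k) *v w \<noteq> 0" by (rule pownz)
  then show False using A0 by simp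
qed

lemma line_inv:
  fixes x :: "'k::field^'n^'n"
  assumes "v \<noteq> 0" "x *v v = v"
  shows "\<exists>W. vec.subspace W \<and> vec.dim W = 1 \<and> invariant x W"
proof (intro exI conjI)
  show "vec.subspace (vec.span {v})" by (rule vec.subspace_span)
  show "vec.dim (vec.span {v}) = 1" using assms(1) by simp
  show "invariant x (vec.span {v})"
    unfolding invariant_def vec.span_singleton using assms(2) by (auto simp: vec.scale)
qed



theorem lemma1p11:
  fixes \<sigma> :: "'k::{field,finite} \<Rightarrow> 'k"
    and B :: "'k^'n \<Rightarrow> 'k^'n \<Rightarrow> 'k"
    and x :: "'k^'n^'n"
  assumes form: "bil_or_herm_form \<sigma> B"
    and nd_or_zero: "nondegenerate_form B \<or> zero_form B"
    and x_in: "x \<in> similarities B"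
    and ppow: "\<exists>q k. prime q \<and> elem_order x = q ^ k"
    and img_prime: "prime (quot_order (group_center (similarities B)) x)"
  shows "(unipotent x \<and> (\<exists>W. vec.subspace W \<and> vec.dim W = 1 \<and> invariant x W))
    \<or> (zero_form B \<and> semisimple x \<and>
        (\<exists>U W. vec.subspace U \<and> vec.subspace W \<and> U \<noteq> {0} \<and> W \<noteq> {0} \<and>
           U \<inter> W = {0} \<and> {u + w | u w. u \<in> U \<and> w \<in> W} = UNIV \<and>
           invariant x U \<and> invariant x W))
    \<or> (nondegenerate_form B \<and> semisimple x \<and>
        (\<exists>W. vec.subspace W \<and> W \<noteq> {0} \<and> W \<noteq> UNIV \<and> nondegenerate_subspace B W \<and>
           invariant x W \<and> invariant x (orth_compl B W)))
    \<or> (nondegenerate_form B \<and> max_witt_index B \<and> semisimple x \<and>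
        (\<exists>W. vec.subspace W \<and> totally_isotropic B W \<and> 2 * vec.dim W = CARD('n) \<and>
           invariant x W))
    \<or> (semisimple x \<and> acts_irreducibly x)"
proof -
  obtain q k where qk: "prime q" "elem_order x = q ^ k" using ppow by blast
  have inv: "invertible x" using x_in unfolding similarities_def by blast
  define m where "m = elem_order x"
  have m0: "0 < m" and xm: "mpow x m = mat 1" using elem_order_props[OF inv] unfolding m_def by auto
  define p where "p = CHAR('k)"
  have pp: "prime p" unfolding p_def by (simp add: finite_imp_CHAR_pos prime_CHAR_semidom)
  show ?thesis
  proof (cases "q = p")
    case True
    have "unipotent x" unfolding unipotent_def using qk True p_def by blast
    moreover obtain v where "v \<noteq> 0" "x *v v = v"
      using unip_fixed[OF pp p_def[symmetric], of x k] xm qk True m_def by auto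
    then have "\<exists>W. vec.subspace W \<and> vec.dim W = 1 \<and> invariant x W" by (rule line_inv)
    ultimately show ?thesis by blast
  next
    case False
    have cop: "coprime m p"
    proof -
      have "coprime q p" using qk(1) pp False by (simp add: primes_coprime)
      then show ?thesis unfolding m_def qk(2) by simp
    qed
    then have ss: "semisimple x" unfolding semisimple_def m_def p_def by simp
    have mk: "of_nat m \<noteq> (0::'k)"
    proof
      assume "of_nat m = (0::'k)"
      then have "p dvd m" unfolding p_def by (simp add: of_nat_eq_0_iff_char_dvd)
      then have "is_unit p" by (rule coprime_common_divisor[OF cop _ dvd_refl])
      then show False using pp by simp
    qed
    show ?thesis
    proof (cases "acts_irreducibly x")
      case True then show ?thesis using ss by blast
    next
      case False
      then obtain U where U: "vec.subspace U" "invariant x U" "U \<noteq> {0}" "U \<noteq> UNIV"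
        unfolding acts_irreducibly_def by blast
      consider "nondegenerate_form B" | "zero_form B" using nd_or_zero by blast
      then show ?thesis
      proof cases
        case 1
        from nondeg_case[OF form 1 x_in m0 xm mk U] show ?thesis using 1 ss by blast
      next
        case 2
        obtain W where W: "vec.subspace W" "invariant x W" "U \<inter> W = {0}"
            "\<forall>v. \<exists>u\<in>U. \<exists>w\<in>W. v = u + w"
          using maschke[OF m0 xm mk U(1) U(2)] by blast
        have W0: "W \<noteq> {0}"
        proof
          assume "W = {0}"
          then have "v \<in> U" for v using W(4) by force
          then show False using U(4) by blast
        qed
        have sum: "{u + w | u w. u \<in> U \<and> w \<in> W} = UNIV" using W(4) by blast
        have "zero_form B \<and> semisimple x \<and>
          (\<exists>U W. vec.subspace U \<and> vec.subspace W \<and> U \<noteq> {0} \<and> W \<noteq> {0} \<and>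
           U \<inter> W = {0} \<and> {u + w | u w. u \<in> U \<and> w \<in> W} = UNIV \<and>
           invariant x U \<and> invariant x W)"
          using 2 ss U W W0 sum by blast
        then show ?thesis by blast
      qed
    qed
  qed
qed

end
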